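(* Let $p=\xi_1+i\operatorname{Im}p$ be a smooth function on $T^\ast(\mathbb{R}^n)\smallsetminus0$. Assume that $\operatorname{Im}p$ strongly changes sign from $-$ to $+$ on $\gamma=[a,b]\times\{w\}$ and that $L_p(\gamma)\ge|\gamma|-\varrho$ for some $0<\varrho<|\gamma|/2$. If $\operatorname{Im}p$ does not depend on $\xi_1$, then for every $\kappa>\varrho$ the function $\operatorname{Im}p$ vanishes identically in a neighborhood of $I_\kappa\times\{w\}$, where $I_\kappa=[a+\kappa,b-\kappa]$.
   Context: Write points of $T^\ast(\mathbb{R}^n)$ as $(x_1,x',\xi_1,\xi')$. A bicharacteristic of $\operatorname{Re}p=\xi_1$ is $\gamma=[a,b]\times\{w_0\}=\{(t,x',0,\xi'):a\le t\le b\}$ with $w_0=(x',0,\xi')$; functions are written $g(t,w)$; $|\gamma|=b-a$. For $\gamma_j=[a_j,b_j]\times\{w_j\}$, $\gamma_j\dashrightarrow\gamma$ means $\liminf a_j\ge a$, $\limsup b_j\le b$, $w_j\to w_0$. $\operatorname{Im}p$ strongly changes sign from $-$ to $+$ on $[a,b]\times\{w_0\}$ if $\operatorname{Im}p(t,w_0)=0$ for $a\le t\le b$ and for every $\varepsilon>0$ there exist $a-\varepsilon<s_-<a$, $b<s_+<b+\varepsilon$ with $\operatorname{Im}p(s_-,w_0)<0<\operatorname{Im}p(s_+,w_0)$. When some sequence of such bicharacteristics $\gamma_j$ with this sign change satisfies $\gamma_j\dashrightarrow\gamma$, $L_p(\gamma)=\inf\liminf_j|\gamma_j|$ over all such sequences.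 *)

theory Defs
  imports "HOL-Analysis.Analysis"
begin

text \<open>Points of T*(R^n) are written ((x1, x'), (xi1, xi')) with x', xi' in an
  (n-1)-dimensional euclidean space 'a.  The zero section is removed.\<close>

definition cotangent_minus_zero :: "((real \<times> 'a::euclidean_space) \<times> (real \<times> 'a)) set" where
  "cotangent_minus_zero = {z. snd z \<noteq> 0}"

fun iter_dderiv :: "'a::real_normed_vector list \<Rightarrow> ('a \<Rightarrow> real) \<Rightarrow> 'a \<Rightarrow> real" where
  "iter_dderiv [] f = f"
| "iter_dderiv (v # vs) f = (\<lambda>x. frechet_derivative (iter_dderiv vs f) (at x) v)"

definition smooth_on :: "'a::real_normed_vector set \<Rightarrow> ('a \<Rightarrow> real) \<Rightarrow> bool" where
  "smooth_on S f \<longleftrightarrow> open S \<and> (\<forall>vs. iter_dderiv vs f differentiable_on S)"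

definition along :: "((real \<times> 'a) \<times> (real \<times> 'a) \<Rightarrow> real) \<Rightarrow> real \<Rightarrow> 'a \<Rightarrow> 'a \<Rightarrow> real" where
  "along q t x' xi' = q ((t, x'), (0, xi'))"

text \<open>gamma = [a,b] x {(x',0,xi')} is a bicharacteristic of Re p = xi1 in T*(R^n) minus 0.\<close>
definition bichar :: "real \<Rightarrow> real \<Rightarrow> 'a::euclidean_space \<Rightarrow> 'a \<Rightarrow> bool" where
  "bichar a b x' xi' \<longleftrightarrow> a \<le> b \<and> xi' \<noteq> 0"

definition strongly_changes_sign ::
  "((real \<times> 'a) \<times> (real \<times> 'a) \<Rightarrow> real) \<Rightarrow> real \<Rightarrow> real \<Rightarrow> 'a \<Rightarrow> 'a \<Rightarrow> bool" where
  "strongly_changes_sign q a b x' xi' \<longleftrightarrow>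
     (\<forall>t\<in>{a..b}. along q t x' xi' = 0) \<and>
     (\<forall>\<epsilon>>0. \<exists>sm sp. a - \<epsilon> < sm \<and> sm < a \<and> b < sp \<and> sp < b + \<epsilon> \<and>
         along q sm x' xi' < 0 \<and> 0 < along q sp x' xi')"

definition bichar_conv ::
  "(nat \<Rightarrow> real) \<Rightarrow> (nat \<Rightarrow> real) \<Rightarrow> (nat \<Rightarrow> 'a::euclidean_space) \<Rightarrow> (nat \<Rightarrow> 'a)
   \<Rightarrow> real \<Rightarrow> real \<Rightarrow> 'a \<Rightarrow> 'a \<Rightarrow> bool" where
  "bichar_conv A B X Xi a b x' xi' \<longleftrightarrow>
     liminf (\<lambda>j. ereal (A j)) \<ge> ereal a \<and> limsup (\<lambda>j. ereal (B j)) \<le> ereal b \<and>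
     X \<longlonglongrightarrow> x' \<and> Xi \<longlonglongrightarrow> xi'"

definition Lp ::
  "((real \<times> 'a::euclidean_space) \<times> (real \<times> 'a) \<Rightarrow> real) \<Rightarrow> real \<Rightarrow> real \<Rightarrow> 'a \<Rightarrow> 'a \<Rightarrow> ereal" where
  "Lp q a b x' xi' = Inf {liminf (\<lambda>j. ereal (B j - A j)) | A B X Xi.
      (\<forall>j. bichar (A j) (B j) (X j) (Xi j) \<and> strongly_changes_sign q (A j) (B j) (X j) (Xi j)) \<and>
      bichar_conv A B X Xi a b x' xi'}"

end

theory Submission
  imports Defs
begin

lemma cont_pos_nbhd:
  fixes f :: "'b::metric_space \<Rightarrow> real"
  assumes "isCont f x" "f x > 0"
  shows "\<exists>\<delta>>0. \<forall>z. dist z x < \<delta> \<longrightarrow> f z > 0"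
proof -
  from assms(1)[unfolded continuous_at_eps_delta, rule_format, OF assms(2)]
  obtain d where "d>0" and d: "\<forall>z. dist z x < d \<longrightarrow> dist (f z) (f x) < f x" by blast
  have "f z > 0" if "dist z x < d" for z
  proof -
    have "\<bar>f z - f x\<bar> < f x" using d that by (simp add: dist_real_def)
    thus ?thesis by linarith
  qed
  thus ?thesis using \<open>d > 0\<close> by blast
qed

lemma cont_neg_nbhd:
  fixes f :: "'b::metric_space \<Rightarrow> real"
  assumes "isCont f x" "f x < 0"
  shows "\<exists>\<delta>>0. \<forall>z. dist z x < \<delta> \<longrightarrow> f z < 0"
proof -
  have "isCont (\<lambda>z. - f z) x" using assms(1) by (intro continuous_intros)
  from cont_pos_nbhd[OF this] assms(2) show ?thesis by auto
qed

lemma sign_change_1d: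
  fixes g :: "real \<Rightarrow> real"
  assumes cont: "continuous_on UNIV g" and uv: "u < v" and gu: "g u < 0" and gv: "g v > 0"
  shows "\<exists>c d. u \<le> c \<and> c \<le> d \<and> d \<le> v \<and> (\<forall>s\<in>{c..d}. g s = 0) \<and>
     (\<forall>e>0. \<exists>sm sp. c - e < sm \<and> sm < c \<and> d < sp \<and> sp < d + e \<and> g sm < 0 \<and> 0 < g sp)"
proof -
  have ic: "isCont g x" for x using cont by (simp add: continuous_on_eq_continuous_at)
  define N where "N = {s\<in>{u..v}. g s < 0}"
  define c where "c = Sup N"
  have uN: "u \<in> N" using gu uv by (simp add: N_def)
  hence Nne: "N \<noteq> {}" by blast
  have Nbdd: "bdd_above N" unfolding N_def by (rule bdd_aboveI[of _ v]) auto
  have Nup: "s \<le> c" if "s \<in> N" for s using cSup_upper[OF that Nbdd] c_def by simp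
  have Nneg: "g s < 0" if "s \<in> N" for s using that by (simp add: N_def)
  have uc: "u \<le> c" using Nup[OF uN] .
  have cv: "c \<le> v" unfolding c_def by (rule cSup_least[OF Nne]) (auto simp: N_def)
  have gc1: "g c \<le> 0"
  proof (rule ccontr)
    assume "\<not> g c \<le> 0"
    hence "g c > 0" by simp
    then obtain \<delta> where d: "\<delta>>0" "\<forall>z. dist z c < \<delta> \<longrightarrow> g z > 0"
      using cont_pos_nbhd[OF ic] by blast
    have "c - \<delta> < Sup N" using d(1) c_def by simp
    then obtain x where x: "x \<in> N" "x > c - \<delta>" using less_cSup_iff[OF Nne Nbdd] by blast
    have "x \<le> c" using Nup[OF x(1)] .
    hence "dist x c < \<delta>" using x(2) by (simp add: dist_real_def)
    hence "g x > 0" using d(2) by blast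
    thus False using Nneg[OF x(1)] by simp
  qed
  have cv': "c < v" using cv gc1 gv by (cases "c = v") auto
  have gpos: "g s \<ge> 0" if "c < s" "s \<le> v" for s
  proof (rule ccontr)
    assume "\<not> g s \<ge> 0"
    hence "s \<in> N" using that uc unfolding N_def by auto
    hence "s \<le> c" by (rule Nup)
    thus False using that(1) by simp
  qed
  have gc: "g c = 0"
  proof (rule ccontr)
    assume "g c \<noteq> 0"
    hence "g c < 0" using gc1 by simp
    then obtain \<delta> where d: "\<delta>>0" "\<forall>z. dist z c < \<delta> \<longrightarrow> g z < 0"
      using cont_neg_nbhd[OF ic] by blast
    define s where "s = min (c + \<delta>/2) v"
    have s: "c < s" "s \<le> v" "dist s c < \<delta>" using d(1) cv' by (auto simp: s_def dist_real_def)
    have "g s < 0" using d(2) s(3) by blast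
    moreover have "g s \<ge> 0" using gpos[OF s(1) s(2)] .
    ultimately show False by simp
  qed
  have left: "\<exists>sm. c - e < sm \<and> sm < c \<and> g sm < 0" if "e > 0" for e
  proof -
    have "c - e < Sup N" using that c_def by simp
    then obtain x where x: "x \<in> N" "x > c - e" using less_cSup_iff[OF Nne Nbdd] by blast
    have "x \<le> c" using Nup[OF x(1)] .
    moreover have "g x < 0" using Nneg[OF x(1)] .
    moreover have "x \<noteq> c" using calculation gc by auto
    ultimately show ?thesis using x(2) by auto
  qed
  define P where "P = {s\<in>{c..v}. g s > 0}"
  define d where "d = Inf P"
  have vP: "v \<in> P" using gv cv by (simp add: P_def)
  hence Pne: "P \<noteq> {}" by blast
  have Pbdd: "bdd_below P" unfolding P_def by (rule bdd_belowI[of _ c]) auto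
  have Plow: "d \<le> s" if "s \<in> P" for s using cInf_lower[OF that Pbdd] d_def by simp
  have Ppos: "g s > 0" if "s \<in> P" for s using that by (simp add: P_def)
  have cd: "c \<le> d" unfolding d_def by (rule cInf_greatest[OF Pne]) (auto simp: P_def)
  have dv: "d \<le> v" using Plow[OF vP] .
  have zero1: "g s = 0" if "c \<le> s" "s < d" for s
  proof -
    have "s \<notin> P"
    proof
      assume "s \<in> P"
      hence "d \<le> s" by (rule Plow)
      thus False using that(2) by simp
    qed
    hence "g s \<le> 0" using that dv unfolding P_def by auto
    moreover have "g s \<ge> 0"
    proof (cases "s = c")
      case True thus ?thesis using gc by simp
    next
      case False thus ?thesis using gpos that dv by simp
    qed
    ultimately show ?thesis by simp
  qed
  have gd: "g d = 0"
  proof (cases "d = c")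
    case True thus ?thesis using gc by simp
  next
    case False
    hence cd': "c < d" using cd by simp
    have "g d \<ge> 0" using gpos[OF cd' dv] .
    moreover have "\<not> g d > 0"
    proof
      assume "g d > 0"
      then obtain \<delta> where dl: "\<delta>>0" "\<forall>z. dist z d < \<delta> \<longrightarrow> g z > 0"
        using cont_pos_nbhd[OF ic] by blast
      define s where "s = max (d - \<delta>/2) c"
      have s: "c \<le> s" "s < d" "dist s d < \<delta>" using dl(1) cd' by (auto simp: s_def dist_real_def)
      have "g s > 0" using dl(2) s(3) by blast
      moreover have "g s = 0" using zero1[OF s(1) s(2)] .
      ultimately show False by simp
    qed
    ultimately show ?thesis by simp
  qed
  have zero: "\<forall>s\<in>{c..d}. g s = 0"
  proof
    fix s assume "s \<in> {c..d}"
    hence "c \<le> s" "s \<le> d" by auto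
    thus "g s = 0" using zero1 gd by (cases "s = d") auto
  qed
  have right: "\<exists>sp. d < sp \<and> sp < d + e \<and> 0 < g sp" if "e > 0" for e
  proof -
    have "Inf P < d + e" using that d_def by simp
    then obtain x where x: "x \<in> P" "x < d + e" using cInf_less_iff[OF Pne Pbdd] by blast
    have "d \<le> x" using Plow[OF x(1)] .
    moreover have "g x > 0" using Ppos[OF x(1)] .
    moreover have "x \<noteq> d" using calculation gd by auto
    ultimately have "d < x" "0 < g x" by auto
    thus ?thesis using x(2) by blast
  qed
  have "\<forall>e>0. \<exists>sm sp. c - e < sm \<and> sm < c \<and> d < sp \<and> sp < d + e \<and> g sm < 0 \<and> 0 < g sp"
  proof (intro allI impI)
    fix e :: real assume "e > 0"
    from left[OF this] right[OF this] show "\<exists>sm sp. c - e < sm \<and> sm < c \<and> d < sp \<and> sp < d + e \<and> g sm < 0 \<and> 0 < g sp"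
      by blast
  qed
  thus ?thesis using uc cd dv zero by blast
qed

lemma dist4:
  fixes ta tb :: "'b::metric_space" and ya yb :: "'c::metric_space"
    and ea eb :: "'d::metric_space" and za zb :: "'e::metric_space"
  defines "D \<equiv> dist ((ta,ya),(ea,za)) ((tb,yb),(eb,zb))"
  shows "dist ta tb \<le> D" "dist ya yb \<le> D" "dist za zb \<le> D"
    "dist ((s,ya),(e,za)) ((s,yb),(e,zb)) \<le> D"
proof -
  have D: "D = sqrt ((dist ta tb)\<^sup>2 + (dist ya yb)\<^sup>2 + (dist ea eb)\<^sup>2 + (dist za zb)\<^sup>2)"
    unfolding D_def by (simp add: dist_Pair_Pair add.assoc)
  have E: "dist ((s,ya),(e,za)) ((s,yb),(e,zb)) = sqrt ((dist ya yb)\<^sup>2 + (dist za zb)\<^sup>2)"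
    by (simp add: dist_Pair_Pair)
  have sq: "x \<le> sqrt y" if "x \<ge> 0" "x\<^sup>2 \<le> y" for x y :: real
    using that real_le_rsqrt by blast
  note z = zero_le_power2[of "dist ta tb"] zero_le_power2[of "dist ya yb"]
    zero_le_power2[of "dist ea eb"] zero_le_power2[of "dist za zb"]
  show "dist ta tb \<le> D" unfolding D by (rule sq, simp, use z in linarith)
  show "dist ya yb \<le> D" unfolding D by (rule sq, simp, use z in linarith)
  show "dist za zb \<le> D" unfolding D by (rule sq, simp, use z in linarith)
  show "dist ((s,ya),(e,za)) ((s,yb),(e,zb)) \<le> D" unfolding D E
    by (rule real_sqrt_le_mono) (use z in linarith)
qed

theorem proposition2p16:
  fixes q :: "(real \<times> 'a::euclidean_space) \<times> (real \<times> 'a) \<Rightarrow> real"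
    and a b \<rho> :: real and x' xi' :: 'a
  assumes smooth: "smooth_on cotangent_minus_zero q"
    and bic: "bichar a b x' xi'"
    and sc: "strongly_changes_sign q a b x' xi'"
    and rho_pos: "0 < \<rho>" and rho_lt: "\<rho> < (b - a) / 2"
    and Lp_ge: "Lp q a b x' xi' \<ge> ereal (b - a - \<rho>)"
    and indep: "\<And>x1 y xi1 eta zeta.
        ((x1, y), (xi1, zeta)) \<in> cotangent_minus_zero \<Longrightarrow>
        ((x1, y), (eta, zeta)) \<in> cotangent_minus_zero \<Longrightarrow>
        q ((x1, y), (xi1, zeta)) = q ((x1, y), (eta, zeta))"
  shows "\<forall>\<kappa>>\<rho>. \<exists>U. open U \<and> U \<subseteq> cotangent_minus_zero \<and>
           {((t, x'), (0, xi')) | t. t \<in> {a + \<kappa> .. b - \<kappa>}} \<subseteq> U \<and>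
           (\<forall>z\<in>U. q z = 0)"
proof (intro allI impI)
  fix \<kappa> :: real assume kap: "\<kappa> > \<rho>"
  define S where "S = (cotangent_minus_zero :: ((real \<times> 'a) \<times> (real \<times> 'a)) set)"
  have Sopen: "open S" and qdiff: "q differentiable_on S"
    using smooth unfolding smooth_on_def S_def by (metis iter_dderiv.simps(1))+
  have qcont: "continuous_on S q" by (rule differentiable_imp_continuous_on[OF qdiff])
  have ic: "isCont q z" if "z \<in> S" for z
    using continuous_on_eq_continuous_at[OF Sopen] qcont that by blast
  have memS: "((t,y),(e,z)) \<in> S \<longleftrightarrow> e \<noteq> 0 \<or> z \<noteq> 0" for t y e z
    unfolding S_def cotangent_minus_zero_def by (simp add: zero_prod_def)
  have xi0: "xi' \<noteq> 0" and ab: "a \<le> b" using bic unfolding bichar_def by auto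
  have kpos: "\<kappa> > 0" using kap rho_pos by simp
  define U where "U = interior {z \<in> S. q z = 0}"
  have "open U" "U \<subseteq> S" "\<forall>z\<in>U. q z = 0" using interior_subset[of "{z \<in> S. q z = 0}"]
    by (auto simp: U_def)
  moreover have "{((t, x'), (0, xi')) | t. t \<in> {a + \<kappa> .. b - \<kappa>}} \<subseteq> U"
  proof (rule ccontr)
    assume "\<not> ?thesis"
    then obtain t0 where t0: "t0 \<in> {a+\<kappa>..b-\<kappa>}" and nU: "((t0,x'),(0,xi')) \<notin> U" by blast
    define z0 where "z0 = ((t0,x'),(0::real,xi'))"
    have z0S: "z0 \<in> S" using xi0 memS z0_def by simp
    obtain \<delta>3 where d3: "\<delta>3 > 0" "ball z0 \<delta>3 \<subseteq> S"
      using Sopen z0S open_contains_ball by blast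
    have step: "\<exists>A B X Xi. bichar A B X Xi \<and> strongly_changes_sign q A B X Xi \<and> a - r < A \<and>
       B < b + r \<and> B - A \<le> b - a - \<kappa> + 2*r \<and> dist X x' < r \<and> dist Xi xi' < r"
      if r: "r > 0" for r
    proof -
      obtain sm sp where ss: "a - r < sm" "sm < a" "b < sp" "sp < b + r"
        "q ((sm,x'),(0,xi')) < 0" "0 < q ((sp,x'),(0,xi'))"
        using sc r unfolding strongly_changes_sign_def along_def by blast
      have psmS: "((sm,x'),(0::real,xi')) \<in> S" "((sp,x'),(0::real,xi')) \<in> S" using xi0 memS by auto
      obtain \<delta>1 where d1: "\<delta>1>0" "\<forall>z. dist z ((sm,x'),(0,xi')) < \<delta>1 \<longrightarrow> q z < 0"
        using cont_neg_nbhd[OF ic[OF psmS(1)] ss(5)] by blast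
      obtain \<delta>2 where d2: "\<delta>2>0" "\<forall>z. dist z ((sp,x'),(0,xi')) < \<delta>2 \<longrightarrow> q z > 0"
        using cont_pos_nbhd[OF ic[OF psmS(2)] ss(6)] by blast
      define \<delta> where "\<delta> = min (min \<delta>1 \<delta>2) (min \<delta>3 (min r (min \<kappa> (norm xi'))))"
      have dpos: "\<delta> > 0" using d1 d2 d3 r kpos xi0 by (simp add: \<delta>_def)
      have "\<not> ball z0 \<delta> \<subseteq> {z\<in>S. q z = 0}" using nU dpos unfolding U_def mem_interior z0_def by blast
      then obtain z where zb: "z \<in> ball z0 \<delta>" and zn: "z \<notin> {z\<in>S. q z = 0}" by blast
      obtain t y \<eta> \<zeta> where zeq: "z = ((t,y),(\<eta>,\<zeta>))" by (metis prod.collapse)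
      have zS: "z \<in> S" using zb d3 by (auto simp: \<delta>_def)
      hence qz: "q z \<noteq> 0" using zn by blast
      have dz: "dist z z0 < \<delta>" using zb by (simp add: dist_commute)
      note D = dist4[where ta=t and tb=t0 and ya=y and yb=x' and ea=\<eta> and eb="0::real" and za=\<zeta> and zb=xi']
      have dt: "\<bar>t - t0\<bar> < \<delta>" using D(1) dz zeq z0_def by (simp add: dist_real_def)
      have dy: "dist y x' < \<delta>" using D(2) dz zeq z0_def by simp
      have dzeta: "dist \<zeta> xi' < \<delta>" using D(3) dz zeq z0_def by simp
      have z0': "\<zeta> \<noteq> 0"
      proof
        assume "\<zeta> = 0"
        hence "dist \<zeta> xi' = norm xi'" by (simp add: dist_norm)
        thus False using dzeta by (simp add: \<delta>_def)
      qed
      define g where "g s = q ((s,y),(0,\<zeta>))" for s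
      have gS: "((s,y),(0::real,\<zeta>)) \<in> S" for s using z0' memS by simp
      have gcont: "continuous_on UNIV g"
      proof -
        have "continuous_on UNIV (\<lambda>s::real. ((s,y),(0::real,\<zeta>)))" by (intro continuous_intros)
        moreover have "(\<lambda>s::real. ((s,y),(0::real,\<zeta>))) ` UNIV \<subseteq> S" using gS by auto
        ultimately show ?thesis unfolding g_def using continuous_on_compose2[OF qcont] by blast
      qed
      have gt: "g t \<noteq> 0" using indep[of t y \<eta> \<zeta> 0] zS gS qz zeq unfolding g_def S_def by simp
      have dd: "\<delta> \<le> \<delta>1" "\<delta> \<le> \<delta>2" by (auto simp: \<delta>_def)
      have "dist ((sm,y),(0::real,\<zeta>)) ((sm,x'),(0,xi')) \<le> dist z z0"
        using D(4)[of sm 0] zeq z0_def by simp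
      hence "dist ((sm,y),(0::real,\<zeta>)) ((sm,x'),(0,xi')) < \<delta>1" using dz dd by linarith
      hence gsm: "g sm < 0" using d1 unfolding g_def by blast
      have "dist ((sp,y),(0::real,\<zeta>)) ((sp,x'),(0,xi')) \<le> dist z z0"
        using D(4)[of sp 0] zeq z0_def by simp
      hence "dist ((sp,y),(0::real,\<zeta>)) ((sp,x'),(0,xi')) < \<delta>2" using dz dd by linarith
      hence gsp: "g sp > 0" using d2 unfolding g_def by blast
      have dk: "\<delta> \<le> \<kappa>" "\<delta> \<le> r" by (auto simp: \<delta>_def)
      have along: "along q s y \<zeta> = g s" for s by (simp add: along_def g_def)
      show ?thesis
      proof (cases "g t > 0")
        case True
        have "sm < t" using dt dk t0 ss by auto
        from sign_change_1d[OF gcont this gsm True] obtain c d where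
          cd: "sm \<le> c" "c \<le> d" "d \<le> t" "\<forall>s\<in>{c..d}. g s = 0"
          "\<forall>e>0. \<exists>sm sp. c - e < sm \<and> sm < c \<and> d < sp \<and> sp < d + e \<and> g sm < 0 \<and> 0 < g sp"
          by blast
        have "bichar c d y \<zeta>" using cd z0' by (simp add: bichar_def)
        moreover have "strongly_changes_sign q c d y \<zeta>"
          unfolding strongly_changes_sign_def along using cd by blast
        moreover have "a - r < c" "d < b + r" "d - c \<le> b - a - \<kappa> + 2*r"
          using cd ss dt dk t0 kpos by auto
        moreover have "dist y x' < r" "dist \<zeta> xi' < r" using dy dzeta dk by auto
        ultimately show ?thesis by blast
      next
        case False
        hence gt': "g t < 0" using gt by simp
        have "t < sp" using dt dk t0 ss by auto
        from sign_change_1d[OF gcont this gt' gsp] obtain c d where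
          cd: "t \<le> c" "c \<le> d" "d \<le> sp" "\<forall>s\<in>{c..d}. g s = 0"
          "\<forall>e>0. \<exists>sm sp. c - e < sm \<and> sm < c \<and> d < sp \<and> sp < d + e \<and> g sm < 0 \<and> 0 < g sp"
          by blast
        have "bichar c d y \<zeta>" using cd z0' by (simp add: bichar_def)
        moreover have "strongly_changes_sign q c d y \<zeta>"
          unfolding strongly_changes_sign_def along using cd by blast
        moreover have "a - r < c" "d < b + r" "d - c \<le> b - a - \<kappa> + 2*r"
          using cd ss dt dk t0 kpos by auto
        moreover have "dist y x' < r" "dist \<zeta> xi' < r" using dy dzeta dk by auto
        ultimately show ?thesis by blast
      qed
    qed
    define rr where "rr j = inverse (real (Suc j))" for j
    have rrpos: "rr j > 0" for j by (simp add: rr_def)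
    have rr0: "rr \<longlonglongrightarrow> 0" unfolding rr_def by (rule LIMSEQ_inverse_real_of_nat)
    have "\<forall>j. \<exists>A B X Xi. bichar A B X Xi \<and> strongly_changes_sign q A B X Xi \<and> a - rr j < A \<and>
       B < b + rr j \<and> B - A \<le> b - a - \<kappa> + 2*rr j \<and> dist X x' < rr j \<and> dist Xi xi' < rr j"
      using step rrpos by blast
    then obtain A B X Xi where R: "\<forall>j. bichar (A j) (B j) (X j) (Xi j) \<and>
       strongly_changes_sign q (A j) (B j) (X j) (Xi j) \<and> a - rr j < A j \<and>
       B j < b + rr j \<and> B j - A j \<le> b - a - \<kappa> + 2*rr j \<and> dist (X j) x' < rr j \<and> dist (Xi j) xi' < rr j"
      by metis
    have lim1: "(\<lambda>j. ereal (a - rr j)) \<longlonglongrightarrow> ereal a"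
      by (intro tendsto_ereal) (use tendsto_diff[OF tendsto_const rr0, of a] in simp)
    have lim2: "(\<lambda>j. ereal (b + rr j)) \<longlonglongrightarrow> ereal b"
      by (intro tendsto_ereal) (use tendsto_add[OF tendsto_const rr0, of b] in simp)
    have lim3: "(\<lambda>j. ereal (b - a - \<kappa> + 2 * rr j)) \<longlonglongrightarrow> ereal (b - a - \<kappa>)"
      by (intro tendsto_ereal) (use tendsto_add[OF tendsto_const tendsto_mult[OF tendsto_const rr0], of "b - a - \<kappa>" 2] in simp)
    have "ereal a = liminf (\<lambda>j. ereal (a - rr j))" using lim_imp_Liminf[OF _ lim1] by simp
    also have "\<dots> \<le> liminf (\<lambda>j. ereal (A j))"
      by (rule Liminf_mono) (use R in \<open>auto intro!: always_eventually less_imp_le\<close>)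
    finally have c1: "liminf (\<lambda>j. ereal (A j)) \<ge> ereal a" .
    have "limsup (\<lambda>j. ereal (B j)) \<le> limsup (\<lambda>j. ereal (b + rr j))"
      by (rule Limsup_mono) (use R in \<open>auto intro!: always_eventually less_imp_le\<close>)
    also have "\<dots> = ereal b" using lim_imp_Limsup[OF _ lim2] by simp
    finally have c2: "limsup (\<lambda>j. ereal (B j)) \<le> ereal b" .
    have eX: "\<forall>j. dist (X j) x' \<le> rr j" and eXi: "\<forall>j. dist (Xi j) xi' \<le> rr j"
      using R less_imp_le by blast+
    have c3: "X \<longlonglongrightarrow> x'"
    proof -
      have "(\<lambda>j. dist (X j) x') \<longlonglongrightarrow> 0"
        by (rule Lim_null_comparison[OF _ rr0]) (use eX in \<open>auto intro: always_eventually\<close>)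
      thus ?thesis using tendsto_dist_iff by blast
    qed
    have c4: "Xi \<longlonglongrightarrow> xi'"
    proof -
      have "(\<lambda>j. dist (Xi j) xi') \<longlonglongrightarrow> 0"
        by (rule Lim_null_comparison[OF _ rr0]) (use eXi in \<open>auto intro: always_eventually\<close>)
      thus ?thesis using tendsto_dist_iff by blast
    qed
    have conv: "bichar_conv A B X Xi a b x' xi'" using c1 c2 c3 c4 unfolding bichar_conv_def by blast
    have "Lp q a b x' xi' \<le> liminf (\<lambda>j. ereal (B j - A j))"
      unfolding Lp_def
      apply (rule Inf_lower)
      apply (rule CollectI)
      apply (rule exI[of _ A], rule exI[of _ B], rule exI[of _ X], rule exI[of _ Xi])
      using R conv by simp
    also have "\<dots> \<le> liminf (\<lambda>j. ereal (b - a - \<kappa> + 2 * rr j))"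
      by (rule Liminf_mono) (use R in \<open>auto intro!: always_eventually\<close>)
    also have "\<dots> = ereal (b - a - \<kappa>)" using lim_imp_Liminf[OF _ lim3] by simp
    also have "\<dots> < ereal (b - a - \<rho>)" using kap by simp
    finally show False using Lp_ge by simp
  qed
  ultimately show "\<exists>U. open U \<and> U \<subseteq> cotangent_minus_zero \<and>
           {((t, x'), (0, xi')) | t. t \<in> {a + \<kappa> .. b - \<kappa>}} \<subseteq> U \<and> (\<forall>z\<in>U. q z = 0)"
    unfolding S_def by blast
qed

end
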